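(* Let $0<i_1<i_2<\cdots<i_L$ be integers and let $\mathcal S=\{x_0,x_{i_1},\ldots,x_{i_L}\}$, with associated restricted right-arm rotation distance $d_{RRA}^{\mathcal S}$ (rotations allowed only at the nodes at levels $0,i_1,\ldots,i_L$ on the right arm). Let $T_1,T_2$ be finite rooted binary trees with the same number of nodes such that $(T_1,T_2)$ is a reduced tree pair diagram, and let the word associated to $(T_1,T_2)$ (its unique normal form) be $x_{a_1}^{r_1}\cdots x_{a_k}^{r_k}x_{b_l}^{-s_l}\cdots x_{b_1}^{-s_1}$. If some $x_t^{\pm1}$ with $1\le t\le i_1-1$ appears in this normal form, then $d_{RRA}^{\mathcal S}(T_1,T_2)$ is not defined. Conversely, if no $x_t^{\pm1}$ with $1\le t\le i_1-1$ appears in this normal form, then $d_{RRA}^{\mathcal S}(T_1,T_2)$ is defined.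
   Context: Trees: all trees are finite rooted binary trees in which each internal vertex (node) has a left and a right child; childless vertices are leaves. A tree with $n$ nodes has $n+1$ leaves, numbered $0,1,\ldots,n$ from left to right. The right arm (right side) of a tree consists of the root together with all nodes reachable from the root by a path consisting only of right edges. The level of a node is the number of edges on the path from it to the root. An exposed caret is a node both of whose children are leaves; its leaves $i,i+1$ form a sibling pair. Rotations: if $N$ is a node whose left child $M$ is a node, with $A,B$ the left and right subtrees of $M$ and $C$ the right subtree of $N$, right rotation at $N$ replaces the subtree at $N$ by a tree whose root has left subtree $A$ and whose right child is a node with left subtree $B$ and right subtree $C$; left rotation at $N$ is the inverse operation (possible only when the right child of $N$ is a node). Rotations preserve the number of nodes. Thompson's group $F=\langle x_0,x_1,\ldots\mid x_i^{-1}x_nx_i=x_{n+1}\ (i<n)\rangle$; its elements have normal forms $x_{a_1}^{r_1}\cdots x_{a_k}^{r_k}x_{b_l}^{-s_l}\cdots x_{b_1}^{-s_1}$ ($r_i,s_i>0$, $a_1<\cdots<a_k$, $b_1<\cdots<b_l$), unique if whenever both $x_i$ and $x_i^{-1}$ occur so does $x_{i+1}^{\pm1}$. Tree pair diagrams: a pair $(T_1,T_2)$ of trees with the same number $n$ of nodes. The leaf exponent of leaf $k$ in a tree is the length of the longest path of left edges going upward from leaf $k$ none of whose vertices lies on the right arm. The word associated to $(T_1,T_2)$ is $x_0^{f_0}x_1^{f_1}\cdots x_n^{f_n}x_n^{-e_n}\cdots x_1^{-e_1}x_0^{-e_0}$, where $e_i$ (resp. $f_i$) is the leaf exponent of leaf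 $i$ in $T_1$ (resp. $T_2$); $(T_1,T_2)$ represents the element of $F$ given by this word. The diagram is reduced if there is no $i$ such that leaves $i,i+1$ form a sibling pair in both $T_1$ and $T_2$; for a reduced diagram the associated word is the unique normal form. Restricted right-arm rotation distance: for $\mathcal S=\{x_0,x_{i_1},\ldots,x_{i_L}\}$ and trees $T_1,T_2$ with the same number of nodes, $d_{RRA}^{\mathcal S}(T_1,T_2)$ is the minimal number of (left or right) rotations, each performed at a node on the right arm at one of the levels $0,i_1,\ldots,i_L$, needed to transform $T_1$ into $T_2$; it is said to be defined when some such sequence of rotations exists. *)

theory Defs
  imports Main
begin

datatype tree = Leaf | Node tree tree

fun num_nodes :: "tree \<Rightarrow> nat" where
  "num_nodes Leaf = 0"
| "num_nodes (Node l r) = Suc (num_nodes l + num_nodes r)"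

text \<open>Vertices are addressed by their path from the root (False = left edge, True = right edge).
  The leaves, listed from left to right (leaf 0, leaf 1, ...).\<close>
fun leaves :: "tree \<Rightarrow> bool list list" where
  "leaves Leaf = [[]]"
| "leaves (Node l r) = map (Cons False) (leaves l) @ map (Cons True) (leaves r)"

text \<open>A vertex (given by its path) that is an ancestor of a leaf is a node; it lies on the right arm
  iff its path consists of right edges only.\<close>
definition on_right_arm_path :: "bool list \<Rightarrow> bool" where
  "on_right_arm_path q \<longleftrightarrow> list_all id q"

text \<open>Leaf exponent of leaf k: length m of the longest path of left edges going upward from the leaf
  none of whose vertices lies on the right arm. The vertices of such a path are the leaf itself
  (not a node, hence not on the right arm) and its ancestors at distance 1..m.\<close>
definition leaf_exp :: "tree \<Rightarrow> nat \<Rightarrow> nat" where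
  "leaf_exp T k = (let p = leaves T ! k in
     Max {m. m \<le> length p \<and> drop (length p - m) p = replicate m False \<and>
             (\<forall>j\<in>{1..m}. \<not> on_right_arm_path (take (length p - j) p))})"

definition sibling_pair :: "tree \<Rightarrow> nat \<Rightarrow> bool" where
  "sibling_pair T i \<longleftrightarrow> Suc i < length (leaves T) \<and>
     (\<exists>q. leaves T ! i = q @ [False] \<and> leaves T ! Suc i = q @ [True])"

definition reduced :: "tree \<Rightarrow> tree \<Rightarrow> bool" where
  "reduced T1 T2 \<longleftrightarrow> \<not> (\<exists>i. sibling_pair T1 i \<and> sibling_pair T2 i)"

text \<open>The word associated to (T1,T2), as a list of letters (generator index, integer exponent):
  x_0^{f_0} ... x_n^{f_n} x_n^{-e_n} ... x_0^{-e_0}.\<close>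
definition assoc_word :: "tree \<Rightarrow> tree \<Rightarrow> (nat \<times> int) list" where
  "assoc_word T1 T2 = (let n = num_nodes T1 in
     map (\<lambda>j. (j, int (leaf_exp T2 j))) [0..<Suc n] @
     map (\<lambda>j. (j, - int (leaf_exp T1 j))) (rev [0..<Suc n]))"

definition appears :: "nat \<Rightarrow> (nat \<times> int) list \<Rightarrow> bool" where
  "appears t w \<longleftrightarrow> (\<exists>z. (t, z) \<in> set w \<and> z \<noteq> 0)"

fun rot_right :: "tree \<Rightarrow> tree option" where
  "rot_right (Node (Node A B) C) = Some (Node A (Node B C))"
| "rot_right _ = None"

fun rot_left :: "tree \<Rightarrow> tree option" where
  "rot_left (Node A (Node B C)) = Some (Node (Node A B) C)"
| "rot_left _ = None"

fun at_right_arm :: "nat \<Rightarrow> (tree \<Rightarrow> tree option) \<Rightarrow> tree \<Rightarrow> tree option" where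
  "at_right_arm 0 f t = f t"
| "at_right_arm (Suc k) f Leaf = None"
| "at_right_arm (Suc k) f (Node l r) = map_option (Node l) (at_right_arm k f r)"

definition rra_step :: "nat set \<Rightarrow> tree \<Rightarrow> tree \<Rightarrow> bool" where
  "rra_step Lv T T' \<longleftrightarrow> (\<exists>k\<in>Lv. at_right_arm k rot_right T = Some T' \<or> at_right_arm k rot_left T = Some T')"

definition rra_defined :: "nat set \<Rightarrow> tree \<Rightarrow> tree \<Rightarrow> bool" where
  "rra_defined Lv T1 T2 \<longleftrightarrow> (rra_step Lv)\<^sup>*\<^sup>* T1 T2"

definition d_RRA :: "nat set \<Rightarrow> tree \<Rightarrow> tree \<Rightarrow> nat" where
  "d_RRA Lv T1 T2 = (LEAST n. ((rra_step Lv) ^^ n) T1 T2)"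

end

theory Submission
  imports Defs
begin

fun nlv :: "tree \<Rightarrow> nat" where
  "nlv Leaf = 1"
| "nlv (Node l r) = nlv l + nlv r"

lemma nlv_pos: "nlv T \<ge> 1" by (induction T) auto
lemma length_leaves: "length (leaves T) = nlv T" by (induction T) auto
lemma nlv_num: "nlv T = Suc (num_nodes T)" by (induction T) auto

fun subs :: "nat \<Rightarrow> tree \<Rightarrow> (nat \<times> tree) set" where
  "subs d Leaf = {}"
| "subs d (Node l r) = insert (d, Node l r) (subs d l \<union> subs (d + nlv l) r)"

fun nonarm :: "nat \<Rightarrow> tree \<Rightarrow> (nat \<times> tree) set" where
  "nonarm d Leaf = {}"
| "nonarm d (Node l r) = subs d l \<union> nonarm (d + nlv l) r"

lemma subs_bound: "(a,U) \<in> subs d T \<Longrightarrow> d \<le> a \<and> a < d + nlv T"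
proof (induction T arbitrary: d)
  case Leaf then show ?case by simp
next
  case (Node l r)
  then show ?case using nlv_pos[of l] nlv_pos[of r] by fastforce
qed

lemma nonarm_subs: "nonarm d T \<subseteq> subs d T"
  by (induction T arbitrary: d) auto

lemma subs_node: "(a,U) \<in> subs d T \<Longrightarrow> U \<noteq> Leaf"
  by (induction T arbitrary: d) auto

lemma subs_trans: "(a,U) \<in> subs d T \<Longrightarrow> (b,V) \<in> subs a U \<Longrightarrow> (b,V) \<in> subs d T"
  by (induction T arbitrary: d) auto

lemma caret_exists: "U \<noteq> Leaf \<Longrightarrow> \<exists>b. (b, Node Leaf Leaf) \<in> subs a U"
proof (induction U arbitrary: a)
  case Leaf then show ?case by simp
next
  case (Node x y)
  show ?case
  proof (cases "x = Leaf")
    case True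
    show ?thesis
    proof (cases "y = Leaf")
      case True
      with \<open>x = Leaf\<close> show ?thesis by auto
    next
      case False
      with Node.IH(2)[of "a + nlv x"] show ?thesis by auto
    qed
  next
    case False
    with Node.IH(1)[of a] show ?thesis by auto
  qed
qed

lemma leaves_nth_l: "t < nlv l \<Longrightarrow> leaves (Node l r) ! t = False # leaves l ! t"
  by (simp add: nth_append length_leaves)

lemma leaves_nth_r: "nlv l \<le> t \<Longrightarrow> t < nlv l + nlv r \<Longrightarrow> leaves (Node l r) ! t = True # leaves r ! (t - nlv l)"
  by (simp add: nth_append length_leaves)

lemma sib_L: "sibling_pair l j \<Longrightarrow> sibling_pair (Node l r) j"
  unfolding sibling_pair_def
  using leaves_nth_l[of j l r] leaves_nth_l[of "Suc j" l r]
  by (auto simp: length_leaves)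

lemma sib_R: "sibling_pair r j \<Longrightarrow> sibling_pair (Node l r) (j + nlv l)"
  unfolding sibling_pair_def
  using leaves_nth_r[of l "j + nlv l" r] leaves_nth_r[of l "Suc j + nlv l" r] length_leaves[of r]
  by (auto simp: length_leaves)

lemma sib_subs: "(i, Node Leaf Leaf) \<in> subs d T \<Longrightarrow> sibling_pair T (i - d)"
proof (induction T arbitrary: d)
  case Leaf then show ?case by simp
next
  case (Node l r)
  consider "(i, Node Leaf Leaf) = (d, Node l r)" | "(i, Node Leaf Leaf) \<in> subs d l"
    | "(i, Node Leaf Leaf) \<in> subs (d + nlv l) r" using Node.prems by auto
  then show ?case
  proof cases
    case 1 then show ?thesis by (auto simp: sibling_pair_def)
  next
    case 2 then show ?thesis using Node.IH(1) sib_L by blast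
  next
    case 3
    have "sibling_pair r (i - (d + nlv l))" using Node.IH(2) 3 by blast
    from sib_R[OF this, of l] subs_bound[OF 3] show ?thesis
      by (metis add.commute diff_diff_left le_add_diff_inverse2 add_le_imp_le_diff)
  qed
qed

lemma lexp_char:
  fixes q :: "bool list"
  shows "Max {m. m \<le> length q \<and> drop (length q - m) q = replicate m False \<and>
             (\<forall>j\<in>{1..m}. \<not> on_right_arm_path (take (length q - j) q))} \<noteq> 0
     \<longleftrightarrow> (q \<noteq> [] \<and> last q = False \<and> \<not> list_all id (butlast q))" (is "Max ?M \<noteq> 0 \<longleftrightarrow> ?R")
proof -
  have fin: "finite ?M" by (rule finite_subset[of _ "{..length q}"]) auto
  have z: "0 \<in> ?M" by simp
  show ?thesis
  proof
    assume "Max ?M \<noteq> 0"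
    moreover have "Max ?M \<in> ?M" using fin z Max_in by blast
    ultimately obtain m where m: "m \<in> ?M" "m \<noteq> 0" by blast
    then have ne: "q \<noteq> []" by auto
    have d: "drop (length q - m) q = replicate m False" using m by auto
    have dne: "drop (length q - m) q \<noteq> []" using m ne by simp
    have "last q = last (drop (length q - m) q)"
      using dne by (metis append_take_drop_id last_append)
    also have "\<dots> = False" using d m by simp
    finally have l: "last q = False" .
    have "\<not> on_right_arm_path (take (length q - 1) q)" using m by auto
    then have "\<not> list_all id (butlast q)" by (simp add: on_right_arm_path_def butlast_conv_take)
    with ne l show ?R by simp
  next
    assume R: ?R
    have "drop (length q - 1) q = [last q]"
      using R by (metis append_butlast_last_id append_eq_conv_conj length_butlast)
    then have "1 \<in> ?M" using R by (simp add: on_right_arm_path_def butlast_conv_take Suc_le_eq)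
    then have "1 \<le> Max ?M" using fin Max_ge by blast
    then show "Max ?M \<noteq> 0" by simp
  qed
qed

lemma leaf_exp_char: "leaf_exp T t \<noteq> 0 \<longleftrightarrow>
   (leaves T ! t \<noteq> [] \<and> last (leaves T ! t) = False \<and> \<not> list_all id (butlast (leaves T ! t)))"
  unfolding leaf_exp_def Let_def by (rule lexp_char)

lemma leaves0: "set (leaves T ! 0) \<subseteq> {False}"
proof (induction T)
  case Leaf then show ?case by simp
next
  case (Node l r)
  then show ?case using leaves_nth_l[of 0 l r] nlv_pos[of l] by simp
qed

lemma leaves_ne: "T \<noteq> Leaf \<Longrightarrow> t < nlv T \<Longrightarrow> leaves T ! t \<noteq> []"
  by (cases T) (auto simp: nth_append length_leaves)

lemma subs_char: "t < nlv T \<Longrightarrow>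
  (\<exists>U. (t + d, U) \<in> subs d T) \<longleftrightarrow> (leaves T ! t \<noteq> [] \<and> last (leaves T ! t) = False)"
proof (induction T arbitrary: t d)
  case Leaf then show ?case by simp
next
  case (Node l r)
  show ?case
  proof (cases "t < nlv l")
    case True
    have notr: "(t + d, U) \<notin> subs (d + nlv l) r" for U
      using subs_bound[of "t+d" U "d + nlv l" r] True by auto
    have q: "leaves (Node l r) ! t = False # leaves l ! t" using True leaves_nth_l by blast
    show ?thesis
    proof (cases "t = 0")
      case True
      have "set (leaves l ! 0) \<subseteq> {False}" by (rule leaves0)
      then have "last (False # leaves l ! 0) = False"
        by (metis last_ConsL last_ConsR last_in_set singletonD subsetD)
      with True q show ?thesis by auto
    next
      case False
      then have "l \<noteq> Leaf" using \<open>t < nlv l\<close> by auto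
      then have "leaves l ! t \<noteq> []" using leaves_ne \<open>t < nlv l\<close> by blast
      moreover have "(\<exists>U. (t + d, U) \<in> subs d (Node l r)) \<longleftrightarrow> (\<exists>U. (t + d, U) \<in> subs d l)"
        using notr False by auto
      ultimately show ?thesis using Node.IH(1)[OF \<open>t < nlv l\<close>, of d] q by simp
    qed
  next
    case False
    have notl: "(t + d, U) \<notin> subs d l" for U
      using subs_bound[of "t+d" U d l] False by auto
    have q: "leaves (Node l r) ! t = True # leaves r ! (t - nlv l)" using False leaves_nth_r Node.prems by simp
    have tr: "t - nlv l < nlv r" using Node.prems False by simp
    have e: "t - nlv l + (d + nlv l) = t + d" using False by simp
    have "(\<exists>U. (t + d, U) \<in> subs d (Node l r)) \<longleftrightarrow> (\<exists>U. (t + d, U) \<in> subs (d + nlv l) r)"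
      using notl False nlv_pos[of l] by auto
    then show ?thesis using Node.IH(2)[OF tr, of "d + nlv l"] q e by simp
  qed
qed

lemma nonarm_char: "t < nlv T \<Longrightarrow>
  (\<exists>U. (t + d, U) \<in> nonarm d T) \<longleftrightarrow>
   (leaves T ! t \<noteq> [] \<and> last (leaves T ! t) = False \<and> \<not> list_all id (butlast (leaves T ! t)))"
proof (induction T arbitrary: t d)
  case Leaf then show ?case by simp
next
  case (Node l r)
  show ?case
  proof (cases "t < nlv l")
    case True
    have notr: "(t + d, U) \<notin> nonarm (d + nlv l) r" for U
      using nonarm_subs subs_bound[of "t+d" U "d + nlv l" r] True by fastforce
    have q: "leaves (Node l r) ! t = False # leaves l ! t" using True leaves_nth_l by blast
    have "(\<exists>U. (t + d, U) \<in> nonarm d (Node l r)) \<longleftrightarrow> (\<exists>U. (t + d, U) \<in> subs d l)"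
      using notr by auto
    also have "\<dots> \<longleftrightarrow> (leaves l ! t \<noteq> [] \<and> last (leaves l ! t) = False)"
      using subs_char[OF True] by blast
    finally show ?thesis using q by (cases "leaves l ! t") auto
  next
    case False
    have notl: "(t + d, U) \<notin> subs d l" for U
      using subs_bound[of "t+d" U d l] False by auto
    have q: "leaves (Node l r) ! t = True # leaves r ! (t - nlv l)" using False leaves_nth_r Node.prems by simp
    have tr: "t - nlv l < nlv r" using Node.prems False by simp
    have e: "t - nlv l + (d + nlv l) = t + d" using False by simp
    have "(\<exists>U. (t + d, U) \<in> nonarm d (Node l r)) \<longleftrightarrow> (\<exists>U. (t + d, U) \<in> nonarm (d + nlv l) r)"
      using notl by auto
    then show ?thesis using Node.IH(2)[OF tr, of "d + nlv l"] q e
      by (cases "leaves r ! (t - nlv l)") auto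
  qed
qed

lemma leaf_exp_nonarm: "t < nlv T \<Longrightarrow> leaf_exp T t \<noteq> 0 \<longleftrightarrow> (\<exists>U. (t, U) \<in> nonarm 0 T)"
  using nonarm_char[of t T 0] leaf_exp_char[of T t] by simp


lemma rot_sym: "rot_right T = Some T' \<longleftrightarrow> rot_left T' = Some T"
proof
  assume "rot_right T = Some T'" then show "rot_left T' = Some T"
    by (cases T rule: rot_right.cases) auto
next
  assume "rot_left T' = Some T" then show "rot_right T = Some T'"
    by (cases T' rule: rot_left.cases) auto
qed

lemma arm_sym: "at_right_arm k rot_right T = Some T' \<longleftrightarrow> at_right_arm k rot_left T' = Some T"
proof (induction k arbitrary: T T')
  case 0 then show ?case using rot_sym by simp
next
  case (Suc k)
  show ?case
    by (cases T; cases T') (auto simp: Suc.IH)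
qed

lemma rot_nn: "rot_right T = Some T' \<Longrightarrow> num_nodes T' = num_nodes T"
  by (cases T rule: rot_right.cases) auto

lemma arm_nn: "at_right_arm k rot_right T = Some T' \<Longrightarrow> num_nodes T' = num_nodes T"
proof (induction k arbitrary: T T')
  case 0 then show ?case using rot_nn by simp
next
  case (Suc k)
  then show ?case by (cases T) auto
qed

lemma arm_nonarm: "at_right_arm k rot_right T = Some T' \<Longrightarrow>
   (k = 0 \<and> a \<noteq> d) \<or> (0 < k \<and> a < d + k) \<Longrightarrow>
   ((a,U) \<in> nonarm d T \<longleftrightarrow> (a,U) \<in> nonarm d T')"
proof (induction k arbitrary: T T' d)
  case 0
  then obtain A B C where "T = Node (Node A B) C" "T' = Node A (Node B C)"
    by (cases T rule: rot_right.cases) auto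
  then show ?case using 0 by (auto simp: ac_simps)
next
  case (Suc k)
  then obtain l r r' where T: "T = Node l r" "T' = Node l r'" "at_right_arm k rot_right r = Some r'"
    by (cases T) auto
  have "(k = 0 \<and> a \<noteq> d + nlv l) \<or> (0 < k \<and> a < d + nlv l + k)"
    using Suc.prems(2) nlv_pos[of l] by auto
  from Suc.IH[OF T(3) this] show ?case using T by simp
qed

lemma step_sym: "rra_step Lv T T' \<Longrightarrow> rra_step Lv T' T"
  unfolding rra_step_def using arm_sym by blast

lemma step_nn: "rra_step Lv T T' \<Longrightarrow> num_nodes T' = num_nodes T"
  unfolding rra_step_def using arm_nn arm_sym by metis

lemma star_sym: "(rra_step Lv)\<^sup>*\<^sup>* T T' \<Longrightarrow> (rra_step Lv)\<^sup>*\<^sup>* T' T"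
proof (induction rule: rtranclp_induct)
  case base then show ?case by simp
next
  case (step y z)
  then show ?case using step_sym converse_rtranclp_into_rtranclp by metis
qed

lemma star_nn: "(rra_step Lv)\<^sup>*\<^sup>* T T' \<Longrightarrow> num_nodes T' = num_nodes T"
  by (induction rule: rtranclp_induct) (auto dest: step_nn)

lemma step_inv:
  assumes "rra_step Lv T T'" "\<forall>k\<in>Lv. k = 0 \<or> p \<le> k" "1 \<le> a" "a < p"
  shows "(a,U) \<in> nonarm 0 T \<longleftrightarrow> (a,U) \<in> nonarm 0 T'"
proof -
  obtain k where k: "k \<in> Lv" "at_right_arm k rot_right T = Some T' \<or> at_right_arm k rot_right T' = Some T"
    using assms(1) arm_sym unfolding rra_step_def by blast
  have c: "(k = 0 \<and> a \<noteq> 0) \<or> (0 < k \<and> a < 0 + k)" using assms k by force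
  from k(2) show ?thesis
  proof
    assume "at_right_arm k rot_right T = Some T'" then show ?thesis using arm_nonarm c by blast
  next
    assume "at_right_arm k rot_right T' = Some T" then show ?thesis using arm_nonarm c by blast
  qed
qed

lemma star_inv:
  assumes "(rra_step Lv)\<^sup>*\<^sup>* T T'" "\<forall>k\<in>Lv. k = 0 \<or> p \<le> k" "1 \<le> a" "a < p"
  shows "(a,U) \<in> nonarm 0 T \<longleftrightarrow> (a,U) \<in> nonarm 0 T'"
  using assms(1)
proof (induction rule: rtranclp_induct)
  case base then show ?case by simp
next
  case (step y z)
  then show ?case using step_inv[OF step(2) assms(2-4)] by blast
qed


fun comb :: "nat \<Rightarrow> tree" where
  "comb 0 = Leaf"
| "comb (Suc k) = Node (comb k) Leaf"

fun mu :: "tree \<Rightarrow> nat" where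
  "mu Leaf = 0"
| "mu (Node l r) = num_nodes l + mu r"

lemma arm_foldr: "at_right_arm (length xs) f (foldr Node xs X) = map_option (foldr Node xs) (f X)"
  by (induction xs) (auto simp: option.map_comp o_def option.map_ident)

lemma decomp: "(\<exists>m. T = foldr Node (replicate m Leaf) Leaf) \<or>
   (\<exists>j A B C. T = foldr Node (replicate j Leaf) (Node (Node A B) C))"
proof (induction T)
  case Leaf
  have "Leaf = foldr Node (replicate 0 Leaf) Leaf" by simp
  then show ?case by blast
next
  case (Node l r)
  show ?case
  proof (cases l)
    case Leaf
    from Node.IH(2) show ?thesis
    proof
      assume "\<exists>m. r = foldr Node (replicate m Leaf) Leaf"
      then obtain m where "r = foldr Node (replicate m Leaf) Leaf" by blast
      then have "Node l r = foldr Node (replicate (Suc m) Leaf) Leaf" using Leaf by simp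
      then show ?thesis by blast
    next
      assume "\<exists>j A B C. r = foldr Node (replicate j Leaf) (Node (Node A B) C)"
      then obtain j A B C where "r = foldr Node (replicate j Leaf) (Node (Node A B) C)" by blast
      then have "Node l r = foldr Node (replicate (Suc j) Leaf) (Node (Node A B) C)" using Leaf by simp
      then show ?thesis by blast
    qed
  next
    case (Node A B)
    then have "Node l r = foldr Node (replicate 0 Leaf) (Node (Node A B) r)" by simp
    then show ?thesis by blast
  qed
qed

lemma mu_foldr: "mu (foldr Node (replicate j Leaf) X) = mu X"
  by (induction j) auto

lemma nn_foldr: "num_nodes (foldr Node (replicate j Leaf) X) = j + num_nodes X"
  by (induction j) auto

lemma nonarm_foldr: "nonarm d (foldr Node (replicate j Leaf) X) = nonarm (d + j) X"
  by (induction j arbitrary: d) auto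

definition good :: "nat \<Rightarrow> tree \<Rightarrow> bool" where
  "good p T \<longleftrightarrow> (\<forall>a U. (a,U) \<in> nonarm 0 T \<longrightarrow> a = 0 \<or> p \<le> a)"

lemma star_good:
  assumes "(rra_step Lv)\<^sup>*\<^sup>* T T'" "\<forall>k\<in>Lv. k = 0 \<or> p \<le> k" "good p T"
  shows "good p T'"
  unfolding good_def
proof (intro allI impI)
  fix a U assume a: "(a,U) \<in> nonarm 0 T'"
  show "a = 0 \<or> p \<le> a"
  proof (rule ccontr)
    assume "\<not> (a = 0 \<or> p \<le> a)"
    then have "1 \<le> a" "a < p" by auto
    with a star_inv[OF assms(1) assms(2)] have "(a,U) \<in> nonarm 0 T" by blast
    with assms(3) \<open>\<not> (a = 0 \<or> p \<le> a)\<close> show False unfolding good_def by blast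
  qed
qed

lemma shift_star:
  assumes "0 \<in> Lv"
  shows "(rra_step Lv)\<^sup>*\<^sup>* (Node (comb k) (foldr Node (replicate s Leaf) Y)) (Node (comb (k + s)) Y)"
proof (induction s arbitrary: k)
  case 0 then show ?case by simp
next
  case (Suc s)
  have "rra_step Lv (Node (comb k) (foldr Node (replicate (Suc s) Leaf) Y))
          (Node (comb (Suc k)) (foldr Node (replicate s Leaf) Y))"
    unfolding rra_step_def using assms by (intro bexI[of _ 0]) auto
  moreover have "(rra_step Lv)\<^sup>*\<^sup>* (Node (comb (Suc k)) (foldr Node (replicate s Leaf) Y))
      (Node (comb (k + Suc s)) Y)" using Suc.IH[of "Suc k"] by simp
  ultimately show ?case by (rule converse_rtranclp_into_rtranclp)
qed

lemma far_rot:
  assumes "0 \<in> Lv" "p \<in> Lv" "1 \<le> p" "p \<le> j"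
  shows "(rra_step Lv)\<^sup>*\<^sup>* (foldr Node (replicate j Leaf) (Node (Node A B) C))
            (foldr Node (replicate j Leaf) (Node A (Node B C)))"
proof -
  define s where "s = j - p"
  have jj: "replicate j Leaf = Leaf # replicate s Leaf @ replicate (p - 1) Leaf"
  proof -
    have "j = Suc (s + (p - 1))" using assms unfolding s_def by simp
    then show ?thesis by (simp add: replicate_add)
  qed
  have e: "foldr Node (replicate j Leaf) X =
      Node (comb 0) (foldr Node (replicate s Leaf) (foldr Node (replicate (p - 1) Leaf) X))" for X
    by (simp add: jj)
  have e2: "Node (comb s) (foldr Node (replicate (p - 1) Leaf) X)
       = foldr Node (comb s # replicate (p - 1) Leaf) X" for X by simp
  have len: "length (comb s # replicate (p - 1) Leaf) = p" using assms by simp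
  have st: "rra_step Lv (foldr Node (comb s # replicate (p - 1) Leaf) (Node (Node A B) C))
                    (foldr Node (comb s # replicate (p - 1) Leaf) (Node A (Node B C)))"
  proof -
    have "at_right_arm p rot_right (foldr Node (comb s # replicate (p - 1) Leaf) (Node (Node A B) C))
        = Some (foldr Node (comb s # replicate (p - 1) Leaf) (Node A (Node B C)))"
      using arm_foldr[of "comb s # replicate (p - 1) Leaf" rot_right "Node (Node A B) C", unfolded len]
      by (simp only: rot_right.simps option.map)
    then show ?thesis unfolding rra_step_def using assms(2) by blast
  qed
  have 1: "(rra_step Lv)\<^sup>*\<^sup>* (foldr Node (replicate j Leaf) (Node (Node A B) C))
          (foldr Node (comb s # replicate (p - 1) Leaf) (Node (Node A B) C))"
    unfolding e e2[symmetric]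
    using shift_star[OF assms(1), of 0 s "foldr Node (replicate (p - 1) Leaf) (Node (Node A B) C)"] by simp
  have 2: "(rra_step Lv)\<^sup>*\<^sup>* (foldr Node (comb s # replicate (p - 1) Leaf) (Node A (Node B C)))
          (foldr Node (replicate j Leaf) (Node A (Node B C)))"
    unfolding e e2[symmetric]
    using star_sym[OF shift_star[OF assms(1), of 0 s "foldr Node (replicate (p - 1) Leaf) (Node A (Node B C))"]] by simp
  from 1 st 2 show ?thesis by (meson rtranclp.rtrancl_into_rtrancl rtranclp_trans)
qed

lemma to_vine:
  assumes "0 \<in> Lv" "p \<in> Lv" "1 \<le> p" "\<forall>k\<in>Lv. k = 0 \<or> p \<le> k"
  shows "good p T \<Longrightarrow> (rra_step Lv)\<^sup>*\<^sup>* T (foldr Node (replicate (num_nodes T) Leaf) Leaf)"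
proof (induction "mu T" arbitrary: T rule: less_induct)
  case less
  from decomp[of T] show ?case
  proof
    assume "\<exists>m. T = foldr Node (replicate m Leaf) Leaf"
    then obtain m where "T = foldr Node (replicate m Leaf) Leaf" by blast
    then show ?thesis using nn_foldr[of m Leaf] by simp
  next
    assume "\<exists>j A B C. T = foldr Node (replicate j Leaf) (Node (Node A B) C)"
    then obtain j A B C where T: "T = foldr Node (replicate j Leaf) (Node (Node A B) C)" by blast
    define T' where "T' = foldr Node (replicate j Leaf) (Node A (Node B C))"
    have st: "(rra_step Lv)\<^sup>*\<^sup>* T T'"
    proof (cases "j = 0")
      case True
      then show ?thesis unfolding T T'_def rra_step_def using assms(1)
        by (intro r_into_rtranclp bexI[of _ 0]) auto
    next
      case False
      have "p \<le> j"
      proof (rule ccontr)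
        assume "\<not> p \<le> j"
        have "(j, Node A B) \<in> nonarm 0 T" unfolding T nonarm_foldr by simp
        then show False using less.prems False \<open>\<not> p \<le> j\<close> unfolding good_def by blast
      qed
      then show ?thesis unfolding T T'_def using far_rot assms by blast
    qed
    have "mu T' < mu T" unfolding T T'_def mu_foldr by simp
    moreover have "good p T'" using star_good[OF st assms(4) less.prems] .
    ultimately have "(rra_step Lv)\<^sup>*\<^sup>* T' (foldr Node (replicate (num_nodes T') Leaf) Leaf)"
      using less.hyps by blast
    moreover have "num_nodes T' = num_nodes T" using star_nn[OF st] .
    ultimately show ?thesis using st by (metis rtranclp_trans)
  qed
qed

lemma appears_char: "appears t (assoc_word T1 T2) \<longleftrightarrow>
   t \<le> num_nodes T1 \<and> (leaf_exp T2 t \<noteq> 0 \<or> leaf_exp T1 t \<noteq> 0)"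
  unfolding appears_def assoc_word_def Let_def
proof -
  have "(\<exists>z. (t, z) \<in> set (map (\<lambda>j. (j, int (leaf_exp T2 j))) [0..<Suc (num_nodes T1)] @
             map (\<lambda>j. (j, - int (leaf_exp T1 j))) (rev [0..<Suc (num_nodes T1)])) \<and> z \<noteq> 0)
      \<longleftrightarrow> (\<exists>z. ((t < Suc (num_nodes T1) \<and> z = int (leaf_exp T2 t)) \<or>
                   (t < Suc (num_nodes T1) \<and> z = - int (leaf_exp T1 t))) \<and> z \<noteq> 0)"
    by (simp only: set_append set_map set_rev set_upt Un_iff image_iff atLeastLessThan_iff) auto
  also have "\<dots> \<longleftrightarrow> t \<le> num_nodes T1 \<and> (leaf_exp T2 t \<noteq> 0 \<or> leaf_exp T1 t \<noteq> 0)"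
    by auto
  finally show "(\<exists>z. (t, z) \<in> set (map (\<lambda>j. (j, int (leaf_exp T2 j))) [0..<Suc (num_nodes T1)] @
             map (\<lambda>j. (j, - int (leaf_exp T1 j))) (rev [0..<Suc (num_nodes T1)])) \<and> z \<noteq> 0)
      \<longleftrightarrow> t \<le> num_nodes T1 \<and> (leaf_exp T2 t \<noteq> 0 \<or> leaf_exp T1 t \<noteq> 0)" .
qed


theorem lemma3p4:
  fixes idx :: "nat list" and T1 T2 :: tree
  assumes "idx \<noteq> []" and "0 < hd idx" and "sorted_wrt (<) idx"
    and "num_nodes T1 = num_nodes T2"
    and "reduced T1 T2"
  shows "((\<exists>t. 1 \<le> t \<and> t \<le> hd idx - 1 \<and> appears t (assoc_word T1 T2))
            \<longrightarrow> \<not> rra_defined (insert 0 (set idx)) T1 T2)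
       \<and> ((\<not> (\<exists>t. 1 \<le> t \<and> t \<le> hd idx - 1 \<and> appears t (assoc_word T1 T2)))
            \<longrightarrow> rra_defined (insert 0 (set idx)) T1 T2)"
proof -
  define p where "p = hd idx"
  define Lv where "Lv = insert 0 (set idx)"
  obtain x xs where idx: "idx = x # xs" using assms(1) by (cases idx) auto
  have p1: "1 \<le> p" using assms(2) p_def by simp
  have pL: "p \<in> Lv" "0 \<in> Lv" unfolding p_def Lv_def idx by auto
  have allk: "\<forall>k\<in>Lv. k = 0 \<or> p \<le> k"
    using assms(3) unfolding p_def Lv_def idx by (auto simp: less_imp_le)
  have nl1: "nlv T1 = Suc (num_nodes T1)" and nl2: "nlv T2 = Suc (num_nodes T1)"
    using nlv_num assms(4) by auto
  show ?thesis
  proof (intro conjI impI)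
    assume "\<exists>t. 1 \<le> t \<and> t \<le> hd idx - 1 \<and> appears t (assoc_word T1 T2)"
    then obtain t where t: "1 \<le> t" "t < p" "t \<le> num_nodes T1"
      "leaf_exp T2 t \<noteq> 0 \<or> leaf_exp T1 t \<noteq> 0"
      using p1 unfolding appears_char p_def by fastforce
    show "\<not> rra_defined (insert 0 (set idx)) T1 T2"
    proof
      assume "rra_defined (insert 0 (set idx)) T1 T2"
      then have R: "(rra_step Lv)\<^sup>*\<^sup>* T1 T2" unfolding rra_defined_def Lv_def .
      have "\<exists>U. (t, U) \<in> nonarm 0 T1 \<or> (t, U) \<in> nonarm 0 T2"
        using t(3,4) leaf_exp_nonarm[of t T1] leaf_exp_nonarm[of t T2] nl1 nl2 by auto
      then obtain U where "(t, U) \<in> nonarm 0 T1 \<or> (t, U) \<in> nonarm 0 T2" by blast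
      with star_inv[OF R allk t(1,2)] have U: "(t, U) \<in> subs 0 T1" "(t, U) \<in> subs 0 T2"
        using nonarm_subs by blast+
      obtain b where b: "(b, Node Leaf Leaf) \<in> subs t U"
        using caret_exists subs_node[OF U(1)] by blast
      have "sibling_pair T1 b" using sib_subs[OF subs_trans[OF U(1) b]] by simp
      moreover have "sibling_pair T2 b" using sib_subs[OF subs_trans[OF U(2) b]] by simp
      ultimately show False using assms(5) unfolding reduced_def by blast
    qed
  next
    assume no: "\<not> (\<exists>t. 1 \<le> t \<and> t \<le> hd idx - 1 \<and> appears t (assoc_word T1 T2))"
    have good: "good p T" if "T = T1 \<or> T = T2" for T
      unfolding good_def
    proof (intro allI impI)
      fix a U assume aU: "(a, U) \<in> nonarm 0 T"
      show "a = 0 \<or> p \<le> a"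
      proof (rule ccontr)
        assume c: "\<not> (a = 0 \<or> p \<le> a)"
        have "a < nlv T" using subs_bound[of a U 0 T] aU nonarm_subs by auto
        then have "leaf_exp T a \<noteq> 0" using leaf_exp_nonarm aU by blast
        moreover have "a \<le> num_nodes T1" using \<open>a < nlv T\<close> nl1 nl2 that by auto
        ultimately have "appears a (assoc_word T1 T2)" using that unfolding appears_char by auto
        then show False using no c p_def by auto
      qed
    qed
    have r1: "(rra_step Lv)\<^sup>*\<^sup>* T1 (foldr Node (replicate (num_nodes T1) Leaf) Leaf)"
      using to_vine[OF pL(2) pL(1) p1 allk] good by blast
    have r2: "(rra_step Lv)\<^sup>*\<^sup>* T2 (foldr Node (replicate (num_nodes T1) Leaf) Leaf)"
      using to_vine[OF pL(2) pL(1) p1 allk] good assms(4) by metis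
    show "rra_defined (insert 0 (set idx)) T1 T2"
      unfolding rra_defined_def Lv_def[symmetric] using r1 star_sym[OF r2] by (metis rtranclp_trans)
  qed
qed

end
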